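(* Let $\mathcal{U}\subset\Delta(\mathcal{X}\times\mathcal{Y})$ be a convex and compact uncertainty set and let $\mathrm{h}^{\mathcal{U}}$ be an $\ell$-MRC for $\mathcal{U}$. If $\mathcal{U}$ contains the true underlying distribution $\mathrm{p}^*$, then $$\min_{\mathrm{h}\in \mathrm{T}(\mathcal{X},\mathcal{Y})}R_\ell(\mathrm{h})\leq H_\ell(\mathcal{U}),\qquad R_\ell(\mathrm{h}^{\mathcal{U}})\leq H_\ell(\mathcal{U}).$$ In addition, if $\mathrm{p}^*$ maximizes the $\ell$-entropy over $\mathcal{U}$, then $\ell$-MRCs for $\mathcal{U}$ are Bayes classifiers and $$\min_{\mathrm{h}\in \mathrm{T}(\mathcal{X},\mathcal{Y})}R_\ell(\mathrm{h})= R_\ell(\mathrm{h}^{\mathcal{U}})=H_\ell(\mathcal{U}).$$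
   Context: Let $\mathcal{X}$ and $\mathcal{Y}$ be finite nonempty sets, with $\mathcal{Y}=\{1,\dots,|\mathcal{Y}|\}$. For a finite set $\mathcal{Z}$, $\Delta(\mathcal{Z})$ denotes the set of probability distributions on $\mathcal{Z}$. A classification rule is a map $\mathrm{h}$ assigning to each $x\in\mathcal{X}$ a distribution $\mathrm{h}(\cdot|x)\in\Delta(\mathcal{Y})$; $\mathrm{T}(\mathcal{X},\mathcal{Y})$ is the set of all classification rules. A score function $L:\Delta(\mathcal{Y})\times\mathcal{Y}\to(-\infty,\infty]$ is lower semi-continuous and convex in its first argument; the associated classification loss is $\ell(\mathrm{h},(x,y))=L(\mathrm{h}(\cdot|x),y)$, and for $\mathrm{p}\in\Delta(\mathcal{X}\times\mathcal{Y})$, $\ell(\mathrm{h},\mathrm{p})=\sum_{x,y}\mathrm{p}(x,y)\ell(\mathrm{h},(x,y))$. $H_\ell(\mathrm{p})=\min_{\mathrm{h}\in\mathrm{T}(\mathcal{X},\mathcal{Y})}\ell(\mathrm{h},\mathrm{p})$ and $H_\ell(\mathcal{U})=\max_{\mathrm{p}\in\mathcal{U}}H_\ell(\mathrm{p})$. A rule $\mathrm{h}^{\mathcal{U}}$ is an $\ell$-MRC for $\mathcal{U}$ if $\mathrm{h}^{\mathcal{U}}\in\arg\min_{\mathrm{h}}\max_{\mathrm{p}\in\mathcal{U}}\ell(\mathrm{h},\mathrm{p})$. $\mathrm{p}^*\in\Delta(\mathcal{X}\times\mathcal{Y})$ is the true underlying distribution of instance-label pairs, $R_\ell(\mathrm{h})=\ell(\mathrm{h},\mathrm{p}^*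 )$ is the $\ell$-risk, and a Bayes classifier is a rule minimizing $R_\ell$ over $\mathrm{T}(\mathcal{X},\mathcal{Y})$. *)

theory Defs
  imports "HOL-Analysis.Analysis"
begin

definition prob_simplex :: "(real^'n::finite) set" where
  "prob_simplex = {q. (\<forall>i. 0 \<le> q $ i) \<and> (\<Sum>i\<in>UNIV. q $ i) = 1}"

definition rules :: "('x::finite \<Rightarrow> real^'y::finite) set" where
  "rules = {h. \<forall>x. h x \<in> prob_simplex}"

definition lsc_rel :: "'a::topological_space set \<Rightarrow> ('a \<Rightarrow> ereal) \<Rightarrow> bool" where
  "lsc_rel S f = (\<forall>q\<in>S. f q \<le> Liminf (at q within S) f)"

definition convex_ereal_on :: "'a::real_vector set \<Rightarrow> ('a \<Rightarrow> ereal) \<Rightarrow> bool" where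
  "convex_ereal_on S f = (\<forall>a\<in>S. \<forall>b\<in>S. \<forall>t::real. 0 \<le> t \<and> t \<le> 1 \<longrightarrow>
      f (t *\<^sub>R a + (1 - t) *\<^sub>R b) \<le> ereal t * f a + ereal (1 - t) * f b)"

definition score_function :: "(real^'y::finite \<Rightarrow> 'y \<Rightarrow> ereal) \<Rightarrow> bool" where
  "score_function L = (\<forall>y. (\<forall>q\<in>prob_simplex. L q y \<noteq> -\<infinity>)
      \<and> lsc_rel prob_simplex (\<lambda>q. L q y) \<and> convex_ereal_on prob_simplex (\<lambda>q. L q y))"

text \<open>Expected loss l(h,p) (convention 0 * infinity = 0).\<close>
definition loss :: "(real^'y \<Rightarrow> 'y \<Rightarrow> ereal) \<Rightarrow> ('x::finite \<Rightarrow> real^'y::finite)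
     \<Rightarrow> real^('x \<times> 'y) \<Rightarrow> ereal" where
  "loss L h p = (\<Sum>(x,y)\<in>UNIV. ereal (p $ (x,y)) * L (h x) y)"

definition entropy :: "(real^'y \<Rightarrow> 'y \<Rightarrow> ereal) \<Rightarrow> real^('x::finite \<times> 'y::finite) \<Rightarrow> ereal" where
  "entropy L p = (INF h\<in>(rules :: ('x \<Rightarrow> real^'y) set). loss L h p)"

definition entropy_set :: "(real^'y \<Rightarrow> 'y \<Rightarrow> ereal) \<Rightarrow> (real^('x::finite \<times> 'y::finite)) set \<Rightarrow> ereal" where
  "entropy_set L U = (SUP p\<in>U. entropy L p)"

definition worst_loss :: "(real^'y \<Rightarrow> 'y \<Rightarrow> ereal) \<Rightarrow> (real^('x::finite \<times> 'y::finite)) set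
     \<Rightarrow> ('x \<Rightarrow> real^'y) \<Rightarrow> ereal" where
  "worst_loss L U h = (SUP p\<in>U. loss L h p)"

definition is_MRC :: "(real^'y \<Rightarrow> 'y \<Rightarrow> ereal) \<Rightarrow> (real^('x::finite \<times> 'y::finite)) set
     \<Rightarrow> ('x \<Rightarrow> real^'y) \<Rightarrow> bool" where
  "is_MRC L U h = (h \<in> rules \<and> (\<forall>g\<in>rules. worst_loss L U h \<le> worst_loss L U g))"

definition risk :: "(real^'y \<Rightarrow> 'y \<Rightarrow> ereal) \<Rightarrow> real^('x::finite \<times> 'y::finite)
     \<Rightarrow> ('x \<Rightarrow> real^'y) \<Rightarrow> ereal" where
  "risk L pstar h = loss L h pstar"

definition is_Bayes :: "(real^'y \<Rightarrow> 'y \<Rightarrow> ereal) \<Rightarrow> real^('x::finite \<times> 'y::finite)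
     \<Rightarrow> ('x \<Rightarrow> real^'y) \<Rightarrow> bool" where
  "is_Bayes L pstar h = (h \<in> rules \<and> (\<forall>g\<in>rules. risk L pstar h \<le> risk L pstar g))"

end

theory Submission
  imports Defs
begin


lemma lin_bdd_coeff:
  fixes \<alpha> \<beta> b :: real
  assumes "\<And>t. 0 \<le> t \<Longrightarrow> \<alpha> + \<beta> * t \<le> b"
  shows "\<beta> \<le> 0"
proof (rule ccontr)
  assume "\<not> \<beta> \<le> 0"
  then have bp: "\<beta> > 0" by simp
  define t where "t = (\<bar>b\<bar> + \<bar>\<alpha>\<bar> + 1) / \<beta>"
  have "t \<ge> 0" using bp by (simp add: t_def)
  have "\<beta> * t = \<bar>b\<bar> + \<bar>\<alpha>\<bar> + 1" using bp by (simp add: t_def)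
  with assms[OF \<open>t \<ge> 0\<close>] show False by linarith
qed

lemma conv_lt:
  fixes f1 f2 :: ereal
  assumes "f1 < ereal c" "f2 < ereal c" "ereal m \<le> f1" "ereal m \<le> f2" "0 \<le> t" "t \<le> 1"
  shows "ereal t * f1 + ereal (1-t) * f2 < ereal c"
proof -
  obtain a where a: "f1 = ereal a" using assms by (cases f1) auto
  obtain b where b: "f2 = ereal b" using assms by (cases f2) auto
  have "a < c" "b < c" using assms a b by auto
  have "t * a \<le> t * c" using \<open>a < c\<close> assms(5) by (simp add: mult_left_mono)
  moreover have "(1-t) * b \<le> (1-t) * c" using \<open>b < c\<close> assms(6) by (simp add: mult_left_mono)
  moreover have "t * a < t * c \<or> (1-t) * b < (1-t) * c"
    using \<open>a < c\<close> \<open>b < c\<close> assms(5,6) by (cases "t = 0") auto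
  ultimately have "t * a + (1-t) * b < c" by (auto simp: algebra_simps)
  then show ?thesis using a b by simp
qed

lemma two_point:
  fixes f :: "'a::real_vector \<Rightarrow> 'b::real_vector \<Rightarrow> ereal"
  assumes X: "convex X" and Y: "convex Y"
    and lb: "\<And>x y. x \<in> X \<Longrightarrow> y \<in> Y \<Longrightarrow> ereal m \<le> f x y"
    and cvx: "\<And>x1 x2 y t. x1 \<in> X \<Longrightarrow> x2 \<in> X \<Longrightarrow> y \<in> Y \<Longrightarrow> 0 \<le> t \<Longrightarrow> t \<le> 1 \<Longrightarrow>
        f (t *\<^sub>R x1 + (1-t) *\<^sub>R x2) y \<le> ereal t * f x1 y + ereal (1-t) * f x2 y"
    and aff: "\<And>x y1 y2 t. x \<in> X \<Longrightarrow> y1 \<in> Y \<Longrightarrow> y2 \<in> Y \<Longrightarrow> 0 \<le> t \<Longrightarrow> t \<le> 1 \<Longrightarrow>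
        f x (t *\<^sub>R y1 + (1-t) *\<^sub>R y2) = ereal t * f x y1 + ereal (1-t) * f x y2"
    and hyp: "\<And>y c. y \<in> Y \<Longrightarrow> v < c \<Longrightarrow> \<exists>x\<in>X. f x y < ereal c"
    and y1: "y1 \<in> Y" and y2: "y2 \<in> Y" and vc: "v < c"
  shows "\<exists>x\<in>X. f x y1 < ereal c \<and> f x y2 < ereal c"
proof (rule ccontr)
  assume neg: "\<not> ?thesis"
  define S where "S = {z::real\<times>real. \<exists>x\<in>X. f x y1 \<le> ereal (fst z) \<and> f x y2 \<le> ereal (snd z)}"
  define T where "T = {z::real\<times>real. fst z < c \<and> snd z < c}"
  define ym where "ym = (1/2) *\<^sub>R y1 + (1 - 1/2) *\<^sub>R y2"
  have ym: "ym \<in> Y" unfolding ym_def using Y y1 y2 by (intro convexD) auto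
  have fin: "\<exists>r1 r2. f x y1 = ereal r1 \<and> f x y2 = ereal r2" if x: "x \<in> X" and "f x ym < \<infinity>" for x
  proof -
    have e: "f x ym = ereal (1/2) * f x y1 + ereal (1 - 1/2) * f x y2"
      unfolding ym_def by (rule aff[OF x y1 y2]) auto
    have l1: "ereal m \<le> f x y1" "ereal m \<le> f x y2" using lb x y1 y2 by auto
    have "f x y1 \<noteq> \<infinity>" "f x y2 \<noteq> \<infinity>" using e l1 \<open>f x ym < \<infinity>\<close>
      by (cases "f x y1"; cases "f x y2"; auto)+
    then show ?thesis using l1 by (cases "f x y1"; cases "f x y2"; auto)
  qed
  have Sne: "S \<noteq> {}"
  proof -
    obtain x where x: "x \<in> X" "f x ym < ereal (v+1)" using hyp[OF ym, of "v+1"] by auto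
    then obtain r1 r2 where "f x y1 = ereal r1" "f x y2 = ereal r2" using fin by fastforce
    then have "(r1, r2) \<in> S" using x unfolding S_def by (auto intro!: bexI[of _ x])
    then show ?thesis by auto
  qed
  have "(c-1, c-1) \<in> T" unfolding T_def by simp
  then have Tne: "T \<noteq> {}" by blast
  have convS: "convex S"
  proof (rule convexI)
    fix z w :: "real \<times> real" and u u' :: real
    assume z: "z \<in> S" and w: "w \<in> S" and uu0: "0 \<le> u" "0 \<le> u'" "u + u' = 1"
    then have uu: "0 \<le> u \<and> 0 \<le> u' \<and> u + u' = 1" by simp
    obtain x1 where x1: "x1 \<in> X" "f x1 y1 \<le> ereal (fst z)" "f x1 y2 \<le> ereal (snd z)" using z S_def by auto
    obtain x2 where x2: "x2 \<in> X" "f x2 y1 \<le> ereal (fst w)" "f x2 y2 \<le> ereal (snd w)" using w S_def by auto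
    have u': "u' = 1 - u" using uu by simp
    have xin: "u *\<^sub>R x1 + (1-u) *\<^sub>R x2 \<in> X" using X x1 x2 uu by (intro convexD) auto
    have a: "f (u *\<^sub>R x1 + (1-u) *\<^sub>R x2) y1 \<le> ereal u * f x1 y1 + ereal (1-u) * f x2 y1"
      using cvx[OF x1(1) x2(1) y1] uu by auto
    have b: "f (u *\<^sub>R x1 + (1-u) *\<^sub>R x2) y2 \<le> ereal u * f x1 y2 + ereal (1-u) * f x2 y2"
      using cvx[OF x1(1) x2(1) y2] uu by auto
    have a2: "ereal u * f x1 y1 + ereal (1-u) * f x2 y1 \<le> ereal u * ereal (fst z) + ereal (1-u) * ereal (fst w)"
      using uu x1 x2 by (intro add_mono ereal_mult_left_mono) auto
    have b2: "ereal u * f x1 y2 + ereal (1-u) * f x2 y2 \<le> ereal u * ereal (snd z) + ereal (1-u) * ereal (snd w)"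
      using uu x1 x2 by (intro add_mono ereal_mult_left_mono) auto
    have A: "f (u *\<^sub>R x1 + (1-u) *\<^sub>R x2) y1 \<le> ereal (fst (u *\<^sub>R z + u' *\<^sub>R w))"
      using a a2 u' by simp
    have B: "f (u *\<^sub>R x1 + (1-u) *\<^sub>R x2) y2 \<le> ereal (snd (u *\<^sub>R z + u' *\<^sub>R w))"
      using b b2 u' by simp
    show "u *\<^sub>R z + u' *\<^sub>R w \<in> S" unfolding S_def using xin A B by blast
  qed
  have convT: "convex T" unfolding T_def
  proof (rule convexI, rule CollectI)
    fix z w :: "real \<times> real" and u u' :: real
    assume z: "z \<in> {z. fst z < c \<and> snd z < c}" and w: "w \<in> {z. fst z < c \<and> snd z < c}"
      and uu0: "0 \<le> u" "0 \<le> u'" "u + u' = 1"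
    then have uu: "0 \<le> u \<and> 0 \<le> u' \<and> u + u' = 1" by simp
    have "ereal u * ereal (fst z) + ereal (1-u) * ereal (fst w) < ereal c"
      using z w uu by (intro conv_lt[where m="min (fst z) (fst w)"]) auto
    moreover have "ereal u * ereal (snd z) + ereal (1-u) * ereal (snd w) < ereal c"
      using z w uu by (intro conv_lt[where m="min (snd z) (snd w)"]) auto
    moreover have "u' = 1 - u" using uu by simp
    ultimately show "fst (u *\<^sub>R z + u' *\<^sub>R w) < c \<and> snd (u *\<^sub>R z + u' *\<^sub>R w) < c" by simp
  qed
  have disj: "T \<inter> S = {}"
  proof (rule ccontr)
    assume "T \<inter> S \<noteq> {}"
    then obtain z x where "x \<in> X" "f x y1 \<le> ereal (fst z)" "f x y2 \<le> ereal (snd z)" "fst z < c" "snd z < c"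
      unfolding S_def T_def by auto
    then have "f x y1 < ereal c" "f x y2 < ereal c" "x \<in> X"
      by (auto intro: le_less_trans)
    then show False using neg by blast
  qed
  obtain a b where ab: "a \<noteq> 0" "\<forall>z\<in>T. inner a z \<le> b" "\<forall>z\<in>S. inner a z \<ge> b"
    using separating_hyperplane_sets[OF convT convS Tne Sne disj] by blast
  obtain a1 a2 where a: "a = (a1, a2)" by (cases a)
  have ip: "inner a z = a1 * fst z + a2 * snd z" for z using a by (cases z) (auto simp: inner_prod_def)
  have a1: "a1 \<ge> 0"
  proof -
    have "(a1 * (c - 1) + a2 * (c - 1)) + (- a1) * t \<le> b" if "0 \<le> t" for t
    proof -
      have "(c - 1 - t, c - 1) \<in> T" using that unfolding T_def by auto
      then show ?thesis using ab(2) ip[of "(c - 1 - t, c - 1)"] by (auto simp: algebra_simps)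
    qed
    from lin_bdd_coeff[OF this] show ?thesis by simp
  qed
  have a2: "a2 \<ge> 0"
  proof -
    have "(a1 * (c - 1) + a2 * (c - 1)) + (- a2) * t \<le> b" if "0 \<le> t" for t
    proof -
      have "(c - 1, c - 1 - t) \<in> T" using that unfolding T_def by auto
      then show ?thesis using ab(2) ip[of "(c - 1, c - 1 - t)"] by (auto simp: algebra_simps)
    qed
    from lin_bdd_coeff[OF this] show ?thesis by simp
  qed
  define s where "s = a1 + a2"
  have sp: "s > 0" using a1 a2 ab(1) a unfolding s_def by (auto simp: zero_prod_def)
  have sb: "s * c \<le> b"
  proof (rule ccontr)
    assume "\<not> s * c \<le> b"
    define e where "e = (s * c - b) / (2 * s)"
    have ep: "e > 0" using sp \<open>\<not> s * c \<le> b\<close> by (simp add: e_def)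
    have "(c - e, c - e) \<in> T" using ep unfolding T_def by auto
    then have "s * (c - e) \<le> b" using ab(2) ip[of "(c - e, c - e)"] by (auto simp: s_def algebra_simps)
    moreover have "s * e = (s * c - b) / 2" using sp by (simp add: e_def)
    ultimately show False using \<open>\<not> s * c \<le> b\<close> by (simp add: algebra_simps)
  qed
  define lam where "lam = a1 / s"
  have lam: "0 \<le> lam" "lam \<le> 1" using a1 a2 sp by (auto simp: lam_def s_def)
  have Sbound: "lam * fst z + (1 - lam) * snd z \<ge> c" if "z \<in> S" for z
  proof -
    have "b \<le> inner a z" using ab(3) that by blast
    then have "a1 * fst z + a2 * snd z \<ge> s * c" using ip[of z] sb by linarith
    then have "(a1 * fst z + a2 * snd z) / s \<ge> c" using sp by (simp add: field_simps)
    moreover have "(a1 * fst z + a2 * snd z) / s = lam * fst z + (1 - lam) * snd z"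
    proof -
      have "1 - lam = a2 / s" using sp by (simp add: lam_def s_def field_simps)
      then show ?thesis by (simp add: lam_def add_divide_distrib)
    qed
    ultimately show ?thesis by simp
  qed
  define c1 where "c1 = (v + c) / 2"
  define m' where "m' = min m c1"
  define d where "d = (c - c1) / (c - m')"
  have c1: "v < c1" "c1 < c" using vc by (auto simp: c1_def)
  have d: "0 < d" "d \<le> 1" using c1 by (auto simp: d_def m'_def)
  have cm: "c - m' > 0" using c1 by (auto simp: m'_def)
  have dm: "d * (c - m') = c - c1" using cm by (simp add: d_def)
  have "(1 - d) * c + d * m' = c - d * (c - m')" by (simp add: algebra_simps)
  then have dd: "(1 - d) * c + d * m' = c1" using dm by simp
  define yl where "yl = lam *\<^sub>R y1 + (1 - lam) *\<^sub>R y2"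
  have yl: "yl \<in> Y" unfolding yl_def using Y y1 y2 lam by (intro convexD) auto
  define y' where "y' = (1 - d) *\<^sub>R yl + (1 - (1 - d)) *\<^sub>R ym"
  have y': "y' \<in> Y" unfolding y'_def using Y yl ym d by (intro convexD) auto
  obtain x where x: "x \<in> X" "f x y' < ereal c1" using hyp[OF y' c1(1)] by auto
  have e1: "f x y' = ereal (1 - d) * f x yl + ereal (1 - (1 - d)) * f x ym"
    unfolding y'_def by (rule aff[OF x(1) yl ym]) (use d in auto)
  have e2: "f x yl = ereal lam * f x y1 + ereal (1 - lam) * f x y2"
    unfolding yl_def by (rule aff[OF x(1) y1 y2]) (use lam in auto)
  have e3: "f x ym = ereal (1/2) * f x y1 + ereal (1 - 1/2) * f x y2"
    unfolding ym_def by (rule aff[OF x(1) y1 y2]) auto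
  have lyl: "ereal m \<le> f x yl" using lb x yl by auto
  have lym: "ereal m \<le> f x ym" using lb x ym by auto
  have "f x ym < \<infinity>"
  proof (rule ccontr)
    assume "\<not> f x ym < \<infinity>"
    then have "f x ym = \<infinity>" by simp
    then have "f x y' = \<infinity>" using e1 d lyl by (cases "f x yl") auto
    then show False using x by simp
  qed
  then obtain r1 r2 where r: "f x y1 = ereal r1" "f x y2 = ereal r2" using fin x by blast
  have "(r1, r2) \<in> S" using r x unfolding S_def by (auto intro!: bexI[of _ x])
  then have A: "lam * r1 + (1 - lam) * r2 \<ge> c" using Sbound by force
  have B: "r1 / 2 + r2 / 2 \<ge> m'" using lym e3 r by (simp add: m'_def)
  have "f x y' = ereal ((1 - d) * (lam * r1 + (1 - lam) * r2) + d * (r1/2 + r2/2))"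
    using e1 e2 e3 r by simp
  moreover have "(1 - d) * (lam * r1 + (1 - lam) * r2) + d * (r1/2 + r2/2) \<ge> (1 - d) * c + d * m'"
    using A B d by (intro add_mono mult_left_mono) auto
  ultimately show False using x(2) dd by simp
qed

lemma finite_fip:
  fixes f :: "'a::real_vector \<Rightarrow> 'b::real_vector \<Rightarrow> ereal"
  assumes Y: "convex Y" and Yne: "Y \<noteq> {}"
    and lb: "\<And>x y. x \<in> X0 \<Longrightarrow> y \<in> Y \<Longrightarrow> ereal m \<le> f x y"
    and cvx: "\<And>x1 x2 y t. x1 \<in> X0 \<Longrightarrow> x2 \<in> X0 \<Longrightarrow> y \<in> Y \<Longrightarrow> 0 \<le> t \<Longrightarrow> t \<le> 1 \<Longrightarrow>
        f (t *\<^sub>R x1 + (1-t) *\<^sub>R x2) y \<le> ereal t * f x1 y + ereal (1-t) * f x2 y"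
    and aff: "\<And>x y1 y2 t. x \<in> X0 \<Longrightarrow> y1 \<in> Y \<Longrightarrow> y2 \<in> Y \<Longrightarrow> 0 \<le> t \<Longrightarrow> t \<le> 1 \<Longrightarrow>
        f x (t *\<^sub>R y1 + (1-t) *\<^sub>R y2) = ereal t * f x y1 + ereal (1-t) * f x y2"
    and P: "finite P" "P \<subseteq> Y"
  shows "\<forall>X (c::real). convex X \<and> X \<subseteq> X0 \<and> (\<forall>y c. y \<in> Y \<longrightarrow> v < c \<longrightarrow> (\<exists>x\<in>X. f x y < ereal c)) \<and> v < c
          \<longrightarrow> (\<exists>x\<in>X. \<forall>y\<in>P. f x y < ereal c)"
  using P
proof (induction P rule: finite_induct)
  case empty
  show ?case
  proof (intro allI impI)
    fix X and c :: real assume H: "convex X \<and> X \<subseteq> X0 \<and> (\<forall>y c. y \<in> Y \<longrightarrow> v < c \<longrightarrow> (\<exists>x\<in>X. f x y < ereal c)) \<and> v < c"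
    obtain y where "y \<in> Y" using Yne by auto
    then obtain x where "x \<in> X" using H by blast
    then show "\<exists>x\<in>X. \<forall>y\<in>{}. f x y < ereal c" by auto
  qed
next
  case (insert y0 P)
  show ?case
  proof (intro allI impI)
    fix X and c :: real assume H: "convex X \<and> X \<subseteq> X0 \<and> (\<forall>y c. y \<in> Y \<longrightarrow> v < c \<longrightarrow> (\<exists>x\<in>X. f x y < ereal c)) \<and> v < c"
    have X: "convex X" and XX: "X \<subseteq> X0" and hyp: "\<And>y c. y \<in> Y \<Longrightarrow> v < c \<Longrightarrow> \<exists>x\<in>X. f x y < ereal c"
      and vc: "v < c" using H by auto
    have y0: "y0 \<in> Y" using insert by auto
    define X' where "X' = {x\<in>X. f x y0 < ereal c}"
    have X'X0: "X' \<subseteq> X0" using XX by (auto simp: X'_def)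
    have convX': "convex X'"
    proof (rule convexI)
      fix x1 x2 and u u' :: real assume a: "x1 \<in> X'" "x2 \<in> X'" "0 \<le> u" "0 \<le> u'" "u + u' = 1"
      then have u': "u' = 1 - u" by simp
      have x0: "x1 \<in> X0" "x2 \<in> X0" using a XX by (auto simp: X'_def)
      have "f (u *\<^sub>R x1 + (1-u) *\<^sub>R x2) y0 \<le> ereal u * f x1 y0 + ereal (1-u) * f x2 y0"
        using cvx[OF x0 y0] a by auto
      also have "\<dots> < ereal c"
        using a lb[OF x0(1) y0] lb[OF x0(2) y0] by (intro conv_lt[where m=m]) (auto simp: X'_def)
      finally have "f (u *\<^sub>R x1 + (1-u) *\<^sub>R x2) y0 < ereal c" .
      moreover have "u *\<^sub>R x1 + (1-u) *\<^sub>R x2 \<in> X" using X a by (intro convexD) (auto simp: X'_def)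
      ultimately show "u *\<^sub>R x1 + u' *\<^sub>R x2 \<in> X'" using u' by (auto simp: X'_def)
    qed
    have hyp': "\<exists>x\<in>X'. f x y < ereal c'" if "y \<in> Y" "v < c'" for y c'
    proof -
      have "\<exists>x\<in>X. f x y < ereal (min c c') \<and> f x y0 < ereal (min c c')"
      proof (rule two_point[where m=m and v=v])
        show "convex X" "convex Y" by (fact X, fact Y)
        show "\<And>x y. x \<in> X \<Longrightarrow> y \<in> Y \<Longrightarrow> ereal m \<le> f x y" using lb XX by auto
        show "\<And>x1 x2 y t. x1 \<in> X \<Longrightarrow> x2 \<in> X \<Longrightarrow> y \<in> Y \<Longrightarrow> 0 \<le> t \<Longrightarrow> t \<le> 1 \<Longrightarrow>
          f (t *\<^sub>R x1 + (1-t) *\<^sub>R x2) y \<le> ereal t * f x1 y + ereal (1-t) * f x2 y" using cvx XX by (meson subsetD)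
        show "\<And>x y1 y2 t. x \<in> X \<Longrightarrow> y1 \<in> Y \<Longrightarrow> y2 \<in> Y \<Longrightarrow> 0 \<le> t \<Longrightarrow> t \<le> 1 \<Longrightarrow>
          f x (t *\<^sub>R y1 + (1-t) *\<^sub>R y2) = ereal t * f x y1 + ereal (1-t) * f x y2" using aff XX by (meson subsetD)
        show "\<And>y c. y \<in> Y \<Longrightarrow> v < c \<Longrightarrow> \<exists>x\<in>X. f x y < ereal c" by (fact hyp)
        show "y \<in> Y" "y0 \<in> Y" "v < min c c'" using that y0 vc by auto
      qed
      then obtain x where "x \<in> X" "f x y < ereal (min c c')" "f x y0 < ereal (min c c')" by blast
      then show ?thesis unfolding X'_def
        by (intro bexI[of _ x]) (auto intro: less_le_trans)
    qed
    have "\<exists>x\<in>X'. \<forall>y\<in>P. f x y < ereal c"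
      using insert.IH insert.prems convX' X'X0 hyp' vc by blast
    then show "\<exists>x\<in>X. \<forall>y\<in>insert y0 P. f x y < ereal c" unfolding X'_def by auto
  qed
qed



lemma lsc_seq:
  fixes g :: "'a::metric_space \<Rightarrow> ereal"
  assumes "lsc_rel S g" "q \<in> S" "\<forall>n. s n \<in> S" "s \<longlonglongrightarrow> q"
  shows "g q \<le> Liminf sequentially (\<lambda>n. g (s n))"
proof (subst le_Liminf_iff, intro allI impI)
  fix a assume a: "a < g q"
  have "g q \<le> Liminf (at q within S) g" using assms(1,2) unfolding lsc_rel_def by auto
  then have "a < Liminf (at q within S) g" using a by (rule less_le_trans[rotated])
  then have "eventually (\<lambda>x. a < g x) (at q within S)" by (rule less_LiminfD)
  then obtain d where d: "d > 0" "\<forall>x\<in>S. x \<noteq> q \<and> dist x q < d \<longrightarrow> a < g x"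
    by (auto simp: eventually_at)
  have "eventually (\<lambda>n. dist (s n) q < d) sequentially" using assms(4) d(1) by (rule tendstoD)
  then show "eventually (\<lambda>n. a < g (s n)) sequentially"
  proof (rule eventually_mono)
    fix n assume "dist (s n) q < d"
    then show "a < g (s n)" using d a assms(3) by (cases "s n = q") auto
  qed
qed


lemma lsc_lower_bound:
  fixes g :: "'a::metric_space \<Rightarrow> ereal"
  assumes "compact S" "lsc_rel S g" "\<forall>q\<in>S. g q \<noteq> -\<infinity>"
  shows "\<exists>m. \<forall>q\<in>S. ereal m \<le> g q"
proof (rule ccontr)
  assume "\<not> ?thesis"
  then have "\<forall>n::nat. \<exists>q\<in>S. g q < ereal (- real n)"
    by (auto simp: not_le)
  then obtain s where s: "\<And>n. s n \<in> S" "\<And>n. g (s n) < ereal (- real n)" by metis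
  obtain l r where l: "l \<in> S" "strict_mono r" "(s \<circ> r) \<longlonglongrightarrow> l"
    using seq_compactE[OF compact_imp_seq_compact[OF assms(1)], of s] s(1) by blast
  have "g l \<le> Liminf sequentially (\<lambda>n. g ((s \<circ> r) n))"
    using lsc_seq[OF assms(2) l(1) _ l(3)] s(1) by auto
  moreover have "-\<infinity> < g l" using assms(3) l(1) by auto
  then obtain y where y: "ereal y < g l" using ereal_dense2 by blast
  ultimately have "ereal y < Liminf sequentially (\<lambda>n. g ((s \<circ> r) n))" by (meson less_le_trans)
  then have "eventually (\<lambda>n. ereal y < g ((s \<circ> r) n)) sequentially"
    by (rule less_LiminfD)
  then obtain N where N: "\<And>n. n \<ge> N \<Longrightarrow> ereal y < g (s (r n))" by (auto simp: eventually_sequentially)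
  define n where "n = max N (nat \<lceil>\<bar>y\<bar>\<rceil> + 1)"
  have "ereal y < ereal (- real (r n))" using N[of n] s(2)[of "r n"] unfolding n_def by (meson max.cobounded1 order.strict_trans)
  moreover have "r n \<ge> n" using l(2) by (rule seq_suble)
  moreover have "real n > \<bar>y\<bar>" unfolding n_def by linarith
  ultimately have "y < - real (r n)" "real n \<le> real (r n)" "\<bar>y\<bar> < real n" by auto
  then show False by linarith
qed

lemma simplex_compact: "compact (prob_simplex :: (real^'n::finite) set)"
proof -
  have eq: "prob_simplex = (\<Inter>i. {q::real^'n. 0 \<le> q $ i}) \<inter> {q. inner (\<chi> i. 1) q = 1}"
    by (auto simp: prob_simplex_def inner_vec_def)
  have "closed (prob_simplex :: (real^'n::finite) set)"
    unfolding eq by (intro closed_Int closed_INT ballI closed_halfspace_component_ge_cart closed_hyperplane)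
  moreover have "bounded (prob_simplex :: (real^'n::finite) set)"
  proof -
    have "norm q \<le> real CARD('n)" if "q \<in> prob_simplex" for q :: "real^'n"
    proof -
      have "norm q \<le> (\<Sum>i\<in>UNIV. \<bar>q $ i\<bar>)" by (rule norm_le_l1_cart)
      also have "\<dots> \<le> (\<Sum>i\<in>(UNIV::'n set). 1)"
      proof (rule sum_mono)
        fix i :: 'n
        have "q $ i \<le> (\<Sum>i\<in>UNIV. q $ i)"
          using that by (intro member_le_sum) (auto simp: prob_simplex_def)
        then show "\<bar>q $ i\<bar> \<le> 1" using that by (auto simp: prob_simplex_def)
      qed
      finally show ?thesis by simp
    qed
    then show ?thesis by (auto simp: bounded_iff)
  qed
  ultimately show ?thesis by (simp add: compact_eq_bounded_closed)
qed



lemma ereal_mult_add_real: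
  fixes a b :: ereal
  assumes "0 \<le> c"
  shows "ereal c * (a + b) = ereal c * a + ereal c * b"
  using assms by (cases "c = 0"; cases a; cases b) (auto simp: algebra_simps)

lemma ereal_mult_sum_real:
  fixes f :: "'i \<Rightarrow> ereal"
  assumes "0 \<le> c"
  shows "ereal c * sum f A = (\<Sum>i\<in>A. ereal c * f i)"
proof (induction A rule: infinite_finite_induct)
  case (insert x F)
  then show ?case using assms by (simp add: ereal_mult_add_real)
qed auto

lemma comb_mult:
  fixes A B :: ereal
  assumes "0 \<le> p" "0 \<le> t" "t \<le> 1"
  shows "ereal p * (ereal t * A + ereal (1-t) * B) = ereal t * (ereal p * A) + ereal (1-t) * (ereal p * B)"
  using assms by (simp add: ereal_mult_add_real mult.left_commute)

lemma aff_term: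
  fixes l :: ereal
  assumes "0 \<le> a" "0 \<le> b" "0 \<le> t" "t \<le> 1" "l \<noteq> -\<infinity>"
  shows "ereal (t*a + (1-t)*b) * l = ereal t * (ereal a * l) + ereal (1-t) * (ereal b * l)"
proof (cases l)
  case (real r)
  then show ?thesis by (simp add: algebra_simps)
next
  case PInf
  have ta: "t * a \<ge> 0" "(1-t) * b \<ge> 0" using assms by auto
  show ?thesis
  proof (cases "t * a + (1-t) * b = 0")
    case True
    then have "t * a = 0" "(1-t) * b = 0" using ta by linarith+
    then have "t = 0 \<or> a = 0" "t = 1 \<or> b = 0" by simp_all
    then show ?thesis using PInf True by auto
  next
    case False
    then have "t * a > 0 \<or> (1-t) * b > 0" using ta by linarith
    then have "(t > 0 \<and> a > 0) \<or> (1 - t > 0 \<and> b > 0)" using assms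
      by (auto simp: zero_less_mult_iff)
    moreover have "t * a + (1-t) * b > 0" using False ta by auto
    ultimately show ?thesis using PInf assms by auto
  qed
next
  case MInf
  then show ?thesis using assms by simp
qed

lemma loss_alt: "loss L h p = (\<Sum>k\<in>UNIV. ereal (p $ k) * L (h (fst k)) (snd k))"
  by (simp add: loss_def case_prod_unfold)

lemma simplex_comp: "q \<in> prob_simplex \<Longrightarrow> 0 \<le> q $ i \<and> q $ i \<le> 1"
proof -
  assume q: "q \<in> prob_simplex"
  have "q $ i \<le> (\<Sum>i\<in>UNIV. q $ i)"
    using q by (intro member_le_sum) (auto simp: prob_simplex_def)
  then show ?thesis using q by (auto simp: prob_simplex_def)
qed

lemma simplex_convex: "convex (prob_simplex :: (real^'n::finite) set)"
proof (rule convexI)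
  fix a b :: "real^'n" and u v :: real
  assume ab: "a \<in> prob_simplex" "b \<in> prob_simplex" and uv: "0 \<le> u" "0 \<le> v" "u + v = 1"
  have "(\<Sum>i\<in>UNIV. (u *\<^sub>R a + v *\<^sub>R b) $ i) = u * (\<Sum>i\<in>UNIV. a $ i) + v * (\<Sum>i\<in>UNIV. b $ i)"
    by (simp add: sum.distrib sum_distrib_left)
  also have "\<dots> = 1" using ab uv by (simp add: prob_simplex_def)
  finally have s: "(\<Sum>i\<in>UNIV. (u *\<^sub>R a + v *\<^sub>R b) $ i) = 1" .
  have "0 \<le> (u *\<^sub>R a + v *\<^sub>R b) $ i" for i
    using ab uv by (simp add: prob_simplex_def)
  then show "u *\<^sub>R a + v *\<^sub>R b \<in> prob_simplex" using s by (simp add: prob_simplex_def)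
qed

definition rows :: "real^('x::finite \<times> 'y::finite) \<Rightarrow> 'x \<Rightarrow> real^'y" where
  "rows H = (\<lambda>x. \<chi> y. H $ (x,y))"

definition RV :: "(real^('x::finite \<times> 'y::finite)) set" where
  "RV = {H. \<forall>x. rows H x \<in> prob_simplex}"

definition FF :: "(real^'y \<Rightarrow> 'y \<Rightarrow> ereal) \<Rightarrow> real^('x::finite \<times> 'y::finite) \<Rightarrow> real^('x \<times> 'y) \<Rightarrow> ereal" where
  "FF L H p = loss L (rows H) p"

lemma rows_rules: "H \<in> RV \<Longrightarrow> rows H \<in> rules"
  by (simp add: RV_def rules_def)

lemma rules_rows: "h \<in> rules \<Longrightarrow> (\<chi> k. h (fst k) $ snd k) \<in> RV \<and> rows (\<chi> k. h (fst k) $ snd k) = h"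
proof -
  assume h: "h \<in> rules"
  have r: "rows (\<chi> k. h (fst k) $ snd k) = h"
  proof (rule ext)
    fix x show "rows (\<chi> k. h (fst k) $ snd k) x = h x" by (simp add: rows_def vec_eq_iff)
  qed
  have "(\<chi> k. h (fst k) $ snd k) \<in> RV" unfolding RV_def using h by (simp add: rules_def r)
  then show ?thesis using r by simp
qed

lemma rows_comb: "rows (u *\<^sub>R H1 + v *\<^sub>R H2) x = u *\<^sub>R rows H1 x + v *\<^sub>R rows H2 x"
  by (simp add: rows_def vec_eq_iff)

lemma RV_convex: "convex (RV :: (real^('x::finite \<times> 'y::finite)) set)"
proof (rule convexI)
  fix a b :: "real^('x \<times> 'y)" and u v :: real
  assume ab: "a \<in> RV" "b \<in> RV" and uv: "0 \<le> u" "0 \<le> v" "u + v = 1"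
  have "rows (u *\<^sub>R a + v *\<^sub>R b) x \<in> prob_simplex" for x
  proof -
    have "rows a x \<in> prob_simplex" "rows b x \<in> prob_simplex" using ab by (simp_all add: RV_def)
    then have "u *\<^sub>R rows a x + v *\<^sub>R rows b x \<in> prob_simplex"
      using uv by (intro convexD[OF simplex_convex])
    then show ?thesis by (simp only: rows_comb)
  qed
  then show "u *\<^sub>R a + v *\<^sub>R b \<in> RV" by (simp add: RV_def)
qed

lemma rows_tendsto: "X \<longlonglongrightarrow> H \<Longrightarrow> (\<lambda>n. rows (X n) x) \<longlonglongrightarrow> rows H x"
proof -
  assume X: "X \<longlonglongrightarrow> H"
  show ?thesis
  proof (rule vec_tendstoI)
    fix i
    have "(\<lambda>n. X n $ (x, i)) \<longlonglongrightarrow> H $ (x, i)" using X by (rule tendsto_vec_nth)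
    then show "(\<lambda>n. rows (X n) x $ i) \<longlonglongrightarrow> rows H x $ i" by (simp add: rows_def)
  qed
qed

lemma RV_compact: "compact (RV :: (real^('x::finite \<times> 'y::finite)) set)"
proof -
  have "closed (RV :: (real^('x \<times> 'y)) set)"
    unfolding closed_sequential_limits
  proof (intro allI impI)
    fix X and H :: "real^('x \<times> 'y)"
    assume a: "(\<forall>n. X n \<in> RV) \<and> X \<longlonglongrightarrow> H"
    show "H \<in> RV" unfolding RV_def
    proof (intro CollectI allI)
      fix x
      have "closed (prob_simplex :: (real^'y) set)" using simplex_compact by (rule compact_imp_closed)
      then have cl: "\<And>Z (l::real^'y). (\<forall>n. Z n \<in> prob_simplex) \<Longrightarrow> Z \<longlonglongrightarrow> l \<Longrightarrow> l \<in> prob_simplex"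
        unfolding closed_sequential_limits by blast
      show "rows H x \<in> prob_simplex"
        by (rule cl[of "\<lambda>n. rows (X n) x"]) (use a rows_tendsto[of X H x] in \<open>auto simp: RV_def\<close>)
    qed
  qed
  moreover have "bounded (RV :: (real^('x \<times> 'y)) set)"
  proof -
    have "norm H \<le> real CARD('x \<times> 'y)" if "H \<in> RV" for H :: "real^('x \<times> 'y)"
    proof -
      have "norm H \<le> (\<Sum>i\<in>UNIV. \<bar>H $ i\<bar>)" by (rule norm_le_l1_cart)
      also have "\<dots> \<le> (\<Sum>i\<in>(UNIV::('x \<times> 'y) set). 1)"
      proof (rule sum_mono)
        fix i :: "'x \<times> 'y"
        have "rows H (fst i) \<in> prob_simplex" using that by (auto simp: RV_def)
        then have "0 \<le> rows H (fst i) $ snd i \<and> rows H (fst i) $ snd i \<le> 1" by (rule simplex_comp)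
        then show "\<bar>H $ i\<bar> \<le> 1" by (auto simp: rows_def)
      qed
      finally show ?thesis by simp
    qed
    then show ?thesis by (auto simp: bounded_iff)
  qed
  ultimately show ?thesis by (simp add: compact_eq_bounded_closed)
qed



lemma L_lower:
  fixes L :: "real^'y::finite \<Rightarrow> 'y \<Rightarrow> ereal"
  assumes "score_function L"
  shows "\<exists>m. \<forall>y. \<forall>q\<in>prob_simplex. ereal m \<le> L q y"
proof -
  have "\<forall>y. \<exists>m. \<forall>q\<in>prob_simplex. ereal m \<le> L q y"
  proof
    fix y
    show "\<exists>m. \<forall>q\<in>prob_simplex. ereal m \<le> L q y"
      using assms unfolding score_function_def
      by (intro lsc_lower_bound[OF simplex_compact]) auto
  qed
  then obtain M where M: "\<forall>y. \<forall>q\<in>prob_simplex. ereal (M y) \<le> L q y" by metis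
  define m where "m = - (\<Sum>y\<in>UNIV. \<bar>M y\<bar>)"
  have "m \<le> M y" for y
  proof -
    have "\<bar>M y\<bar> \<le> (\<Sum>y\<in>UNIV. \<bar>M y\<bar>)" by (rule member_le_sum) auto
    then show ?thesis unfolding m_def by linarith
  qed
  then have "\<forall>y. \<forall>q\<in>prob_simplex. ereal m \<le> L q y" using M by (meson ereal_less_eq(3) order_trans)
  then show ?thesis by blast
qed

lemma FF_lower:
  fixes L :: "real^'y::finite \<Rightarrow> 'y \<Rightarrow> ereal" and H p :: "real^('x::finite \<times> 'y)"
  assumes m: "\<forall>y. \<forall>q\<in>prob_simplex. ereal m \<le> L q y" and H: "H \<in> RV" and p: "p \<in> prob_simplex"
  shows "ereal m \<le> FF L H p"
proof -
  have "(\<Sum>k\<in>UNIV. ereal (p $ k) * ereal m) \<le> (\<Sum>k\<in>UNIV. ereal (p $ k) * L (rows H (fst k)) (snd k))"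
  proof (rule sum_mono)
    fix k :: "'x \<times> 'y"
    have "rows H (fst k) \<in> prob_simplex" using H by (auto simp: RV_def)
    then show "ereal (p $ k) * ereal m \<le> ereal (p $ k) * L (rows H (fst k)) (snd k)"
      using m simplex_comp[OF p, of k] by (intro ereal_mult_left_mono) auto
  qed
  moreover have "(\<Sum>k\<in>UNIV. ereal (p $ k) * ereal m) = ereal m"
  proof -
    have "(\<Sum>k\<in>UNIV. ereal (p $ k) * ereal m) = ereal ((\<Sum>k\<in>UNIV. p $ k) * m)"
      by (simp add: sum_distrib_right)
    then show ?thesis using p by (simp add: prob_simplex_def)
  qed
  ultimately show ?thesis by (simp add: FF_def loss_alt)
qed

lemma FF_cvx:
  fixes L :: "real^'y::finite \<Rightarrow> 'y \<Rightarrow> ereal" and H1 H2 p :: "real^('x::finite \<times> 'y)"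
  assumes L: "score_function L" and H: "H1 \<in> RV" "H2 \<in> RV" and t: "0 \<le> t" "t \<le> 1"
    and p: "p \<in> prob_simplex"
  shows "FF L (t *\<^sub>R H1 + (1-t) *\<^sub>R H2) p \<le> ereal t * FF L H1 p + ereal (1-t) * FF L H2 p"
proof -
  have "FF L (t *\<^sub>R H1 + (1-t) *\<^sub>R H2) p
      = (\<Sum>k\<in>UNIV. ereal (p $ k) * L (t *\<^sub>R rows H1 (fst k) + (1-t) *\<^sub>R rows H2 (fst k)) (snd k))"
    by (simp add: FF_def loss_alt rows_comb)
  also have "\<dots> \<le> (\<Sum>k\<in>UNIV. ereal t * (ereal (p $ k) * L (rows H1 (fst k)) (snd k))
        + ereal (1-t) * (ereal (p $ k) * L (rows H2 (fst k)) (snd k)))"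
  proof (rule sum_mono)
    fix k :: "'x \<times> 'y"
    have r: "rows H1 (fst k) \<in> prob_simplex" "rows H2 (fst k) \<in> prob_simplex" using H by (auto simp: RV_def)
    have "L (t *\<^sub>R rows H1 (fst k) + (1-t) *\<^sub>R rows H2 (fst k)) (snd k)
        \<le> ereal t * L (rows H1 (fst k)) (snd k) + ereal (1-t) * L (rows H2 (fst k)) (snd k)"
      using L r t unfolding score_function_def convex_ereal_on_def by blast
    then have "ereal (p $ k) * L (t *\<^sub>R rows H1 (fst k) + (1-t) *\<^sub>R rows H2 (fst k)) (snd k)
        \<le> ereal (p $ k) * (ereal t * L (rows H1 (fst k)) (snd k) + ereal (1-t) * L (rows H2 (fst k)) (snd k))"
      using simplex_comp[OF p, of k] by (intro ereal_mult_left_mono) auto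
    also have "\<dots> = ereal t * (ereal (p $ k) * L (rows H1 (fst k)) (snd k))
        + ereal (1-t) * (ereal (p $ k) * L (rows H2 (fst k)) (snd k))"
      using simplex_comp[OF p, of k] t by (intro comb_mult) auto
    finally show "ereal (p $ k) * L (t *\<^sub>R rows H1 (fst k) + (1-t) *\<^sub>R rows H2 (fst k)) (snd k)
        \<le> ereal t * (ereal (p $ k) * L (rows H1 (fst k)) (snd k))
        + ereal (1-t) * (ereal (p $ k) * L (rows H2 (fst k)) (snd k))" .
  qed
  also have "\<dots> = ereal t * FF L H1 p + ereal (1-t) * FF L H2 p"
    using t by (simp add: FF_def loss_alt sum.distrib ereal_mult_sum_real)
  finally show ?thesis .
qed

lemma FF_aff:
  fixes L :: "real^'y::finite \<Rightarrow> 'y \<Rightarrow> ereal" and H p1 p2 :: "real^('x::finite \<times> 'y)"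
  assumes L: "score_function L" and H: "H \<in> RV" and t: "0 \<le> t" "t \<le> 1"
    and p: "p1 \<in> prob_simplex" "p2 \<in> prob_simplex"
  shows "FF L H (t *\<^sub>R p1 + (1-t) *\<^sub>R p2) = ereal t * FF L H p1 + ereal (1-t) * FF L H p2"
proof -
  have "FF L H (t *\<^sub>R p1 + (1-t) *\<^sub>R p2)
      = (\<Sum>k\<in>UNIV. ereal (t * p1 $ k + (1-t) * p2 $ k) * L (rows H (fst k)) (snd k))"
    by (simp add: FF_def loss_alt)
  also have "\<dots> = (\<Sum>k\<in>UNIV. ereal t * (ereal (p1 $ k) * L (rows H (fst k)) (snd k))
        + ereal (1-t) * (ereal (p2 $ k) * L (rows H (fst k)) (snd k)))"
  proof (rule sum.cong[OF refl])
    fix k :: "'x \<times> 'y"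
    have r: "rows H (fst k) \<in> prob_simplex" using H by (auto simp: RV_def)
    then have "L (rows H (fst k)) (snd k) \<noteq> -\<infinity>" using L unfolding score_function_def by blast
    then show "ereal (t * p1 $ k + (1-t) * p2 $ k) * L (rows H (fst k)) (snd k)
        = ereal t * (ereal (p1 $ k) * L (rows H (fst k)) (snd k))
        + ereal (1-t) * (ereal (p2 $ k) * L (rows H (fst k)) (snd k))"
      using simplex_comp[OF p(1), of k] simplex_comp[OF p(2), of k] t by (intro aff_term) auto
  qed
  also have "\<dots> = ereal t * FF L H p1 + ereal (1-t) * FF L H p2"
    using t by (simp add: FF_def loss_alt sum.distrib ereal_mult_sum_real)
  finally show ?thesis .
qed

lemma liminf_add_lb:
  fixes f g :: "nat \<Rightarrow> ereal"
  assumes fa: "\<And>n. ereal a \<le> f n" and gb: "\<And>n. ereal b \<le> g n"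
  shows "Liminf sequentially f + Liminf sequentially g \<le> Liminf sequentially (\<lambda>n. f n + g n)"
proof -
  define f' where "f' n = f n - ereal a" for n
  define g' where "g' n = g n - ereal b" for n
  have f: "f = (\<lambda>n. f' n + ereal a)"
  proof
    fix n show "f n = f' n + ereal a" using fa[of n] by (cases "f n") (auto simp: f'_def)
  qed
  have g: "g = (\<lambda>n. g' n + ereal b)"
  proof
    fix n show "g n = g' n + ereal b" using gb[of n] by (cases "g n") (auto simp: g'_def)
  qed
  have f0: "0 \<le> f' n" for n using fa[of n] by (cases "f n") (auto simp: f'_def)
  have g0: "0 \<le> g' n" for n using gb[of n] by (cases "g n") (auto simp: g'_def)
  have fg: "(\<lambda>n. f n + g n) = (\<lambda>n. (f' n + g' n) + ereal (a + b))"
  proof (rule ext)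
    fix n
    have "f n + g n = (f' n + ereal a) + (g' n + ereal b)" by (subst f, subst g) (rule refl)
    also have "\<dots> = (f' n + g' n) + (ereal a + ereal b)" by (simp only: ac_simps)
    also have "\<dots> = (f' n + g' n) + ereal (a + b)" by simp
    finally show "f n + g n = (f' n + g' n) + ereal (a + b)" .
  qed
  have e1: "Liminf sequentially f = Liminf sequentially f' + ereal a"
    by (subst f) (rule Liminf_add_ereal_right; auto)
  have e2: "Liminf sequentially g = Liminf sequentially g' + ereal b"
    by (subst g) (rule Liminf_add_ereal_right; auto)
  have e3: "Liminf sequentially (\<lambda>n. f n + g n) = Liminf sequentially (\<lambda>n. f' n + g' n) + ereal (a + b)"
    by (subst fg) (rule Liminf_add_ereal_right; auto)
  have e4: "Liminf sequentially f' + Liminf sequentially g' \<le> Liminf sequentially (\<lambda>n. f' n + g' n)"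
    using f0 g0 by (intro Liminf_add_le) auto
  have "Liminf sequentially f + Liminf sequentially g
      = (Liminf sequentially f' + ereal a) + (Liminf sequentially g' + ereal b)" by (simp only: e1 e2)
  also have "\<dots> = (Liminf sequentially f' + Liminf sequentially g') + (ereal a + ereal b)" by (simp only: ac_simps)
  also have "\<dots> = (Liminf sequentially f' + Liminf sequentially g') + ereal (a + b)" by simp
  also have "\<dots> \<le> Liminf sequentially (\<lambda>n. f' n + g' n) + ereal (a + b)" using e4 by (rule add_right_mono)
  also have "\<dots> = Liminf sequentially (\<lambda>n. f n + g n)" using e3 by simp
  finally show ?thesis .
qed

lemma liminf_sum_le:
  fixes g :: "'i \<Rightarrow> nat \<Rightarrow> ereal"
  assumes "finite K" "\<And>k n. k \<in> K \<Longrightarrow> ereal b \<le> g k n"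
  shows "(\<Sum>k\<in>K. Liminf sequentially (g k)) \<le> Liminf sequentially (\<lambda>n. \<Sum>k\<in>K. g k n)"
  using assms
proof (induction K rule: finite_induct)
  case empty
  then show ?case by (simp add: Liminf_const)
next
  case (insert k K)
  have lbK: "ereal (real (card K) * b) \<le> (\<Sum>j\<in>K. g j n)" for n
  proof -
    have "(\<Sum>j\<in>K. ereal b) \<le> (\<Sum>j\<in>K. g j n)" using insert.prems by (intro sum_mono) auto
    then show ?thesis by simp
  qed
  have "(\<Sum>j\<in>insert k K. Liminf sequentially (g j)) = Liminf sequentially (g k) + (\<Sum>j\<in>K. Liminf sequentially (g j))"
    using insert by simp
  also have "\<dots> \<le> Liminf sequentially (g k) + Liminf sequentially (\<lambda>n. \<Sum>j\<in>K. g j n)"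
    using insert by (intro add_left_mono) auto
  also have "\<dots> \<le> Liminf sequentially (\<lambda>n. g k n + (\<Sum>j\<in>K. g j n))"
    using insert.prems lbK by (intro liminf_add_lb) auto
  also have "\<dots> = Liminf sequentially (\<lambda>n. \<Sum>j\<in>insert k K. g j n)"
    using insert by simp
  finally show ?case .
qed



lemma pm_bound: "0 \<le> p \<Longrightarrow> p \<le> (1::real) \<Longrightarrow> - \<bar>m\<bar> \<le> p * m"
proof -
  assume "0 \<le> p" "p \<le> 1"
  then have "\<bar>p * m\<bar> \<le> \<bar>m\<bar>" by (simp add: abs_mult mult_left_le_one_le)
  then show ?thesis by linarith
qed

lemma FF_closed:
  assumes L: "score_function L" and m: "\<forall>y. \<forall>q\<in>prob_simplex. ereal m \<le> L q y"
    and p: "p \<in> prob_simplex"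
  shows "closed {H \<in> (RV :: (real^('x::finite \<times> 'y::finite)) set). FF L H p \<le> ereal c}"
  unfolding closed_sequential_limits
proof (intro allI impI)
  fix X and H :: "real^('x \<times> 'y)"
  assume a: "(\<forall>n. X n \<in> {H \<in> RV. FF L H p \<le> ereal c}) \<and> X \<longlonglongrightarrow> H"
  have XR: "\<And>n. X n \<in> RV" and Xc: "\<And>n. FF L (X n) p \<le> ereal c" and lim: "X \<longlonglongrightarrow> H" using a by auto
  have "closed (RV :: (real^('x \<times> 'y)) set)" using RV_compact by (rule compact_imp_closed)
  then have HR: "H \<in> RV" unfolding closed_sequential_limits using XR lim by blast
  define g where "g k n = ereal (p $ k) * L (rows (X n) (fst k)) (snd k)" for k n
  have trm: "ereal (p $ k) * L (rows H (fst k)) (snd k) \<le> Liminf sequentially (g k)" for k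
  proof -
    have "L (rows H (fst k)) (snd k) \<le> Liminf sequentially (\<lambda>n. L (rows (X n) (fst k)) (snd k))"
    proof (rule lsc_seq[where S=prob_simplex])
      show "lsc_rel prob_simplex (\<lambda>q. L q (snd k))" using L unfolding score_function_def by blast
      show "rows H (fst k) \<in> prob_simplex" using HR by (auto simp: RV_def)
      show "\<forall>n. rows (X n) (fst k) \<in> prob_simplex" using XR by (auto simp: RV_def)
      show "(\<lambda>n. rows (X n) (fst k)) \<longlonglongrightarrow> rows H (fst k)" using lim by (rule rows_tendsto)
    qed
    then have "ereal (p $ k) * L (rows H (fst k)) (snd k)
        \<le> ereal (p $ k) * Liminf sequentially (\<lambda>n. L (rows (X n) (fst k)) (snd k))"
      using simplex_comp[OF p, of k] by (intro ereal_mult_left_mono) auto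
    also have "\<dots> = Liminf sequentially (g k)"
      unfolding g_def using simplex_comp[OF p, of k]
      by (intro Liminf_ereal_mult_left[symmetric]) auto
    finally show ?thesis .
  qed
  have glb: "ereal (- \<bar>m\<bar>) \<le> g k n" for k n
  proof -
    have "rows (X n) (fst k) \<in> prob_simplex" using XR by (auto simp: RV_def)
    then have "ereal (p $ k) * ereal m \<le> g k n"
      unfolding g_def using m simplex_comp[OF p, of k] by (intro ereal_mult_left_mono) auto
    moreover have "- \<bar>m\<bar> \<le> p $ k * m" using simplex_comp[OF p, of k] by (intro pm_bound) auto
    ultimately show ?thesis by (metis ereal_less_eq(3) order_trans times_ereal.simps(1))
  qed
  have "FF L H p = (\<Sum>k\<in>UNIV. ereal (p $ k) * L (rows H (fst k)) (snd k))"
    by (simp add: FF_def loss_alt)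
  also have "\<dots> \<le> (\<Sum>k\<in>UNIV. Liminf sequentially (g k))" using trm by (intro sum_mono) auto
  also have "\<dots> \<le> Liminf sequentially (\<lambda>n. \<Sum>k\<in>UNIV. g k n)"
    using glb by (intro liminf_sum_le) auto
  also have "\<dots> = Liminf sequentially (\<lambda>n. FF L (X n) p)"
    by (simp add: FF_def loss_alt g_def)
  also have "\<dots> \<le> Liminf sequentially (\<lambda>n. ereal c)"
    using Xc by (intro Liminf_mono) auto
  also have "\<dots> = ereal c" by (simp add: Liminf_const)
  finally show "H \<in> {H \<in> RV. FF L H p \<le> ereal c}" using HR by auto
qed

lemma main_bound:
  fixes L :: "real^'y::finite \<Rightarrow> 'y \<Rightarrow> ereal"
    and U :: "(real^('x::finite \<times> 'y)) set"
  assumes L: "score_function L" and U: "U \<subseteq> prob_simplex" "convex U" "U \<noteq> {}"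
    and c: "entropy_set L U < ereal c"
  shows "\<exists>h\<in>(rules :: ('x \<Rightarrow> real^'y) set). worst_loss L U h \<le> ereal c"
proof -
  obtain m where m: "\<forall>y. \<forall>q\<in>prob_simplex. ereal m \<le> L q y" using L_lower[OF L] by blast
  define V where "V = entropy_set L U"
  define v where "v = (if V = -\<infinity> then c - 1 else real_of_ereal V)"
  have cV: "V < ereal c" using c by (simp add: V_def)
  have Vv: "V \<le> ereal v"
  proof (cases V)
    case (real r) then show ?thesis by (simp add: v_def)
  next
    case PInf then show ?thesis using cV by simp
  next
    case MInf then show ?thesis by simp
  qed
  have vc: "v < c"
  proof (cases V)
    case (real r) then show ?thesis using cV by (simp add: v_def)
  next
    case PInf then show ?thesis using cV by simp
  next
    case MInf then show ?thesis by (simp add: v_def)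
  qed
  have hyp: "\<exists>H\<in>(RV :: (real^('x \<times> 'y)) set). FF L H y < ereal c'" if y: "y \<in> U" and vc': "v < c'" for y c'
  proof -
    have "entropy L y \<le> V" unfolding V_def entropy_set_def using y by (rule SUP_upper)
    then have "entropy L y \<le> ereal v" using Vv by (rule order.trans)
    moreover have "ereal v < ereal c'" using vc' by simp
    ultimately have "entropy L y < ereal c'" by (rule le_less_trans)
    then obtain h where h: "h \<in> (rules :: ('x \<Rightarrow> real^'y) set)" "loss L h y < ereal c'"
      unfolding entropy_def by (auto simp: INF_less_iff)
    show ?thesis
      using rules_rows[OF h(1)] h(2) by (intro bexI[of _ "\<chi> k. h (fst k) $ snd k"]) (auto simp: FF_def)
  qed
  have fip: "\<forall>X (c'::real). convex X \<and> X \<subseteq> RV \<and> (\<forall>y c. y \<in> U \<longrightarrow> v < c \<longrightarrow> (\<exists>x\<in>X. FF L x y < ereal c)) \<and> v < c'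
          \<longrightarrow> (\<exists>x\<in>X. \<forall>y\<in>P. FF L x y < ereal c')" if P: "finite P" "P \<subseteq> U" for P
  proof (rule finite_fip[where m=m])
    show "convex U" "U \<noteq> {}" by (fact U(2), fact U(3))
    show "\<And>x y. x \<in> RV \<Longrightarrow> y \<in> U \<Longrightarrow> ereal m \<le> FF L x y" using FF_lower[OF m] U(1) by blast
    show "\<And>x1 x2 y t. x1 \<in> RV \<Longrightarrow> x2 \<in> RV \<Longrightarrow> y \<in> U \<Longrightarrow> 0 \<le> t \<Longrightarrow> t \<le> 1 \<Longrightarrow>
        FF L (t *\<^sub>R x1 + (1-t) *\<^sub>R x2) y \<le> ereal t * FF L x1 y + ereal (1-t) * FF L x2 y"
      using FF_cvx[OF L] U(1) by blast
    show "\<And>x y1 y2 t. x \<in> RV \<Longrightarrow> y1 \<in> U \<Longrightarrow> y2 \<in> U \<Longrightarrow> 0 \<le> t \<Longrightarrow> t \<le> 1 \<Longrightarrow>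
        FF L x (t *\<^sub>R y1 + (1-t) *\<^sub>R y2) = ereal t * FF L x y1 + ereal (1-t) * FF L x y2"
      using FF_aff[OF L] U(1) by blast
    show "finite P" "P \<subseteq> U" by (fact P(1), fact P(2))
  qed
  have "RV \<inter> (\<Inter>p\<in>U. {H \<in> (RV :: (real^('x \<times> 'y)) set). FF L H p \<le> ereal c}) \<noteq> {}"
  proof (rule compact_imp_fip_image[OF RV_compact])
    show "\<And>p. p \<in> U \<Longrightarrow> closed {H \<in> (RV :: (real^('x \<times> 'y)) set). FF L H p \<le> ereal c}"
      using FF_closed[OF L m] U(1) by blast
    fix P assume P: "finite P" "P \<subseteq> U"
    have "\<exists>x\<in>RV. \<forall>y\<in>P. FF L x y < ereal c"
    proof (rule fip[OF P, THEN spec, THEN spec, THEN mp], intro conjI)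
      show "convex RV" by (rule RV_convex)
      show "\<forall>y c. y \<in> U \<longrightarrow> v < c \<longrightarrow> (\<exists>x\<in>RV. FF L x y < ereal c)" using hyp by blast
    qed (use vc in auto)
    then show "RV \<inter> (\<Inter>p\<in>P. {H \<in> RV. FF L H p \<le> ereal c}) \<noteq> {}"
      by (auto simp: less_imp_le)
  qed
  then obtain H where H: "H \<in> RV" "\<And>p. p \<in> U \<Longrightarrow> FF L H p \<le> ereal c" by blast
  have "worst_loss L U (rows H) \<le> ereal c"
    unfolding worst_loss_def using H(2) by (auto intro!: SUP_least simp: FF_def)
  then show ?thesis using rows_rules[OF H(1)] by blast
qed


theorem corollary1:
  fixes L :: "real^'y::finite \<Rightarrow> 'y \<Rightarrow> ereal"
    and U :: "(real^('x::finite \<times> 'y)) set"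
    and hU :: "'x \<Rightarrow> real^'y"
    and pstar :: "real^('x \<times> 'y)"
  assumes "score_function L"
    and "U \<subseteq> prob_simplex" and "convex U" and "compact U"
    and "is_MRC L U hU"
    and "pstar \<in> U"
  shows "(INF h\<in>rules. risk L pstar h) \<le> entropy_set L U
         \<and> risk L pstar hU \<le> entropy_set L U
         \<and> (entropy L pstar = entropy_set L U \<longrightarrow>
           (\<forall>h. is_MRC L U h \<longrightarrow> is_Bayes L pstar h)
           \<and> (INF h\<in>rules. risk L pstar h) = risk L pstar hU
           \<and> risk L pstar hU = entropy_set L U)"
proof -
  have Une: "U \<noteq> {}" using assms(6) by auto
  have key: "worst_loss L U h \<le> entropy_set L U" if h: "is_MRC L U h" for h
  proof (rule ccontr)
    assume "\<not> worst_loss L U h \<le> entropy_set L U"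
    then have "entropy_set L U < worst_loss L U h" by simp
    then obtain c where c: "entropy_set L U < ereal c" "ereal c < worst_loss L U h"
      using ereal_dense2 by blast
    obtain g where g: "g \<in> (rules :: ('x \<Rightarrow> real^'y) set)" "worst_loss L U g \<le> ereal c"
      using main_bound[OF assms(1,2,3) Une c(1)] by blast
    have "worst_loss L U h \<le> worst_loss L U g" using h g(1) unfolding is_MRC_def by blast
    then show False using g(2) c(2) by simp
  qed
  have rle: "risk L pstar h \<le> worst_loss L U h" for h
    unfolding risk_def worst_loss_def using assms(6) by (rule SUP_upper)
  have inf_eq: "(INF h\<in>rules. risk L pstar h) = entropy L pstar"
    by (simp add: risk_def entropy_def)
  have ent: "entropy L pstar \<le> entropy_set L U"
    unfolding entropy_set_def using assms(6) by (rule SUP_upper)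
  have P1: "(INF h\<in>rules. risk L pstar h) \<le> entropy_set L U" using inf_eq ent by simp
  have P2: "risk L pstar hU \<le> entropy_set L U"
    using rle[of hU] key[OF assms(5)] by (rule order.trans)
  have P3: "(\<forall>h. is_MRC L U h \<longrightarrow> is_Bayes L pstar h)
           \<and> (INF h\<in>rules. risk L pstar h) = risk L pstar hU
           \<and> risk L pstar hU = entropy_set L U"
    if eq: "entropy L pstar = entropy_set L U"
  proof (intro conjI allI impI)
    fix h assume h: "is_MRC L U h"
    have hr: "h \<in> rules" using h by (simp add: is_MRC_def)
    have rh: "risk L pstar h \<le> entropy_set L U" using rle[of h] key[OF h] by (rule order.trans)
    show "is_Bayes L pstar h" unfolding is_Bayes_def
    proof (intro conjI ballI hr)
      fix g :: "'x \<Rightarrow> real^'y" assume g: "g \<in> rules"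
      have "entropy_set L U = (INF h\<in>rules. risk L pstar h)" using inf_eq eq by simp
      also have "\<dots> \<le> risk L pstar g" using g by (rule INF_lower)
      finally show "risk L pstar h \<le> risk L pstar g" using rh by simp
    qed
  next
    have hUr: "hU \<in> rules" using assms(5) by (simp add: is_MRC_def)
    have a: "(INF h\<in>rules. risk L pstar h) \<le> risk L pstar hU" using hUr by (rule INF_lower)
    have b: "risk L pstar hU \<le> (INF h\<in>rules. risk L pstar h)" using P2 inf_eq eq by simp
    show "(INF h\<in>rules. risk L pstar h) = risk L pstar hU" using a b by simp
    show "risk L pstar hU = entropy_set L U" using a b inf_eq eq by simp
  qed
  show ?thesis using P1 P2 P3 by blast
qed

end
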